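(* Let $R>0$ and let $f\colon\mathbb{R}\to(0,\infty)$ be a continuously differentiable convex function. Put $\alpha(t)=\dfrac{tf'(t)-f(t)}{\sqrt{1+f'(t)^2}}$ and $C^+=\{t>0\mid\alpha(t)\ge R\}$. Then either $C^+=\emptyset$, or $t_0^+:=\inf C^+>0$ and $C^+=[t_0^+,\infty)$. *)

theory Defs
  imports "HOL-Analysis.Analysis"
begin

end

theory Submission
  imports Defs
begin

lemma key_ineq:
  fixes a b s F x y :: real
  assumes "0 \<le> a" "a \<le> b" "0 \<le> F" "0 < s"
    and x: "x = sqrt (1 + a\<^sup>2)" and y: "y = sqrt (1 + b\<^sup>2)"
  shows "(s*a - F) * y \<le> (s*b - F) * x"
proof -
  have "a\<^sup>2 \<le> b\<^sup>2" using assms by (intro power_mono) auto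
  hence xy: "x \<le> y" unfolding x y by simp
  have xx: "x\<^sup>2 = 1 + a\<^sup>2" "y\<^sup>2 = 1 + b\<^sup>2" unfolding x y by (simp_all add: add_nonneg_nonneg)
  have "(a*y)\<^sup>2 = a\<^sup>2 + a\<^sup>2*b\<^sup>2" "(b*x)\<^sup>2 = b\<^sup>2 + a\<^sup>2*b\<^sup>2"
    unfolding power_mult_distrib xx by (simp_all add: algebra_simps)
  hence "(a*y)\<^sup>2 \<le> (b*x)\<^sup>2" using \<open>a\<^sup>2 \<le> b\<^sup>2\<close> by simp
  moreover have "0 \<le> b*x" using assms by simp
  ultimately have "a*y \<le> b*x" by (rule power2_le_imp_le)
  hence "s*(a*y) \<le> s*(b*x)" using assms by simp
  moreover have "F*x \<le> F*y" using xy assms by (simp add: mult_left_mono)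
  ultimately show ?thesis by (simp add: algebra_simps)
qed
theorem corollary9:
  fixes f f' :: "real \<Rightarrow> real" and R :: real
  assumes R_pos: "R > 0"
    and f_pos: "\<And>t. f t > 0"
    and f_deriv: "\<And>t. (f has_real_derivative f' t) (at t)"
    and f'_cont: "continuous_on UNIV f'"
    and f_convex: "convex_on UNIV f"
  defines "\<alpha> \<equiv> (\<lambda>t. (t * f' t - f t) / sqrt (1 + (f' t)\<^sup>2))"
  defines "Cplus \<equiv> {t. t > 0 \<and> \<alpha> t \<ge> R}"
  shows "Cplus = {} \<or> (Inf Cplus > 0 \<and> Cplus = {Inf Cplus..})"
proof (cases "Cplus = {}")
  case True then show ?thesis by simp
next
  case False
  have tan: "f x - f c \<ge> f' c * (x - c)" for x c
    by (rule convex_on_imp_above_tangent[OF f_convex]) (auto simp: f_deriv)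
  have mono: "f' s \<le> f' t" if "s \<le> t" for s t
  proof -
    have "f t - f s \<ge> f' s * (t - s)" "f s - f t \<ge> f' t * (s - t)" using tan by auto
    hence "(f' t - f' s) * (t - s) \<ge> 0" by (simp add: algebra_simps)
    thus ?thesis using that by (cases "s = t") (auto simp: zero_le_mult_iff)
  qed
  have fcont: "continuous_on UNIV f"
    using f_deriv by (meson DERIV_continuous continuous_at_imp_continuous_on)
  have nz: "1 + (f' t)\<^sup>2 \<noteq> 0" for t
    using zero_le_power2[of "f' t"] by linarith
  have acont: "continuous_on UNIV \<alpha>" unfolding \<alpha>_def
    by (intro continuous_intros fcont f'_cont) (simp add: nz)
  have up: "\<alpha> t \<ge> \<alpha> s" if "0 < s" "s \<le> t" "\<alpha> s \<ge> R" for s t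
  proof -
    let ?a = "f' s" and ?b = "f' t"
    have sq: "sqrt (1 + ?a\<^sup>2) > 0" "sqrt (1 + ?b\<^sup>2) > 0"
      by (simp_all add: add_pos_nonneg)
    have "\<alpha> s > 0" using that R_pos by linarith
    hence "s * ?a - f s > 0" using sq unfolding \<alpha>_def by (simp add: zero_less_divide_iff)
    hence "s * ?a > 0" using f_pos[of s] by linarith
    hence a0: "?a \<ge> 0" using \<open>0<s\<close> by (simp add: zero_less_mult_iff)
    have ab: "?a \<le> ?b" using mono that by simp
    have ft: "f t \<le> f s + ?b * (t - s)" using tan[of t s] by (simp add: algebra_simps)
    have g: "t * ?b - f t \<ge> s * ?b - f s" using ft by (simp add: algebra_simps)
    have "(s*?a - f s) * sqrt (1 + ?b\<^sup>2) \<le> (s*?b - f s) * sqrt (1 + ?a\<^sup>2)"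
      by (rule key_ineq[OF a0 ab less_imp_le[OF f_pos] \<open>0<s\<close> refl refl])
    also have "\<dots> \<le> (t*?b - f t) * sqrt (1 + ?a\<^sup>2)" using g sq by (simp add: mult_right_mono)
    finally have "(s*?a - f s) * sqrt (1 + ?b\<^sup>2) \<le> (t*?b - f t) * sqrt (1 + ?a\<^sup>2)" .
    thus ?thesis unfolding \<alpha>_def using sq by (simp add: divide_simps)
  qed
  have sq0: "sqrt (1 + (f' 0)\<^sup>2) > 0" by (simp add: add_pos_nonneg)
  have "\<alpha> 0 < 0" using f_pos[of 0] sq0 unfolding \<alpha>_def by (simp add: divide_less_0_iff)
  hence "\<alpha> 0 < R" using R_pos by linarith
  moreover have "isCont \<alpha> 0" using acont by (simp add: continuous_on_eq_continuous_at)
  ultimately have "\<forall>\<^sub>F t in at 0. \<alpha> t < R"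
    by (metis isCont_def order_tendstoD(2))
  hence "\<forall>\<^sub>F t in nhds 0. t \<noteq> 0 \<longrightarrow> \<alpha> t < R" by (simp add: eventually_at_filter)
  hence "\<forall>\<^sub>F t in nhds 0. \<alpha> t < R"
  proof (rule eventually_mono)
    fix t assume "t \<noteq> 0 \<longrightarrow> \<alpha> t < R" thus "\<alpha> t < R" using \<open>\<alpha> 0 < R\<close> by (cases "t = 0") auto
  qed
  then obtain d where d: "d > 0" "\<And>t. dist t 0 < d \<Longrightarrow> \<alpha> t < R"
    by (auto simp: eventually_nhds_metric)
  have C: "Cplus = {t. R \<le> \<alpha> t} \<inter> {d..}"
  proof -
    have "t \<ge> d" if "t > 0" "\<alpha> t \<ge> R" for t using d(2)[of t] that by force
    thus ?thesis unfolding Cplus_def using d by auto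
  qed
  have cl: "closed Cplus" unfolding C
    by (intro closed_Int closed_Collect_le continuous_intros acont[THEN continuous_on_subset]) auto
  have bdd: "bdd_below Cplus" unfolding C by (auto intro: bdd_belowI[of _ d])
  have I: "Inf Cplus \<in> Cplus" by (rule closed_contains_Inf[OF False bdd cl])
  have Ipos: "Inf Cplus > 0" using I unfolding Cplus_def by auto
  have "Cplus = {Inf Cplus..}"
  proof
    show "Cplus \<subseteq> {Inf Cplus..}" using bdd by (auto intro: cInf_lower)
    show "{Inf Cplus..} \<subseteq> Cplus"
    proof
      fix t assume "t \<in> {Inf Cplus..}"
      hence "Inf Cplus \<le> t" by simp
      moreover have "R \<le> \<alpha> (Inf Cplus)" using I unfolding Cplus_def by auto
      ultimately show "t \<in> Cplus" using up[of "Inf Cplus" t] Ipos unfolding Cplus_def by auto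
    qed
  qed
  with Ipos show ?thesis by simp
qed

end
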